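(* Let $P$ be a finite poset and $\Sigma\colon P\to\mathbf{SimpComp}$ a functor, with colimit $K$ (a finite simplicial complex) and canonical injective simplicial maps $i_p\colon\Sigma_p\hookrightarrow K$ inducing order embeddings $\iota_p\colon F(\Sigma_p)\hookrightarrow F(K)$. If $\sigma\le\tau$ in $F(K)$, then there exists $p\in P$ with $\tau\in\iota_p(F(\Sigma_p))$, and for this $p$ the whole interval $[\sigma,\tau]=\{x\in F(K):\sigma\le x\le\tau\}$ is contained in $\iota_p(F(\Sigma_p))$.
   Context: $\mathbf{SimpComp}$ is the category of finite simplicial complexes and injective simplicial maps; $\Sigma_p=\Sigma(p)$. The colimit $K$ is formed by gluing the $\Sigma_p$ along the diagram maps: its vertex set is $\bigsqcup_p V(\Sigma_p)$ modulo the equivalence relation generated by $x\sim\Sigma(p\le q)(x)$, and its simplices are the classes of simplices of the $\Sigma_p$. For a simplicial complex $X$, $F(X)$ denotes its face poset: the set of simplices ordered by inclusion. *)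

theory Defs
  imports Main
begin

definition simplicial_complex :: "'v set \<Rightarrow> 'v set set \<Rightarrow> bool" where
  "simplicial_complex V S \<longleftrightarrow> finite V \<and> (\<forall>s\<in>S. s \<noteq> {} \<and> s \<subseteq> V)
     \<and> (\<forall>v\<in>V. {v} \<in> S) \<and> (\<forall>s\<in>S. \<forall>t. t \<subseteq> s \<and> t \<noteq> {} \<longrightarrow> t \<in> S)"

definition inj_simplicial_map :: "'v set \<Rightarrow> 'v set set \<Rightarrow> 'w set \<Rightarrow> 'w set set \<Rightarrow> ('v \<Rightarrow> 'w) \<Rightarrow> bool" where
  "inj_simplicial_map V1 S1 V2 S2 g \<longleftrightarrow> g ` V1 \<subseteq> V2 \<and> inj_on g V1 \<and> (\<forall>s\<in>S1. g ` s \<in> S2)"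

text \<open>A functor from the finite poset P (the order of type 'p restricted to P) to SimpComp:
  object p is the complex (V p, S p), the arrow p \<le> q is the map f p q.\<close>
definition simpcomp_functor :: "'p::order set \<Rightarrow> ('p \<Rightarrow> 'v set) \<Rightarrow> ('p \<Rightarrow> 'v set set)
     \<Rightarrow> ('p \<Rightarrow> 'p \<Rightarrow> 'v \<Rightarrow> 'v) \<Rightarrow> bool" where
  "simpcomp_functor P V S f \<longleftrightarrow> finite P
     \<and> (\<forall>p\<in>P. simplicial_complex (V p) (S p))
     \<and> (\<forall>p\<in>P. \<forall>q\<in>P. p \<le> q \<longrightarrow> inj_simplicial_map (V p) (S p) (V q) (S q) (f p q))
     \<and> (\<forall>p\<in>P. \<forall>x\<in>V p. f p p x = x)
     \<and> (\<forall>p\<in>P. \<forall>q\<in>P. \<forall>r\<in>P. p \<le> q \<longrightarrow> q \<le> r \<longrightarrow> (\<forall>x\<in>V p. f q r (f p q x) = f p r x))"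

text \<open>Generating relation on the disjoint union of the vertex sets: x ~ \<Sigma>(p\<le>q)(x).\<close>
definition colim_gen :: "'p::order set \<Rightarrow> ('p \<Rightarrow> 'v set) \<Rightarrow> ('p \<Rightarrow> 'p \<Rightarrow> 'v \<Rightarrow> 'v)
     \<Rightarrow> (('p \<times> 'v) \<times> ('p \<times> 'v)) set" where
  "colim_gen P V f = {((p, x), (q, f p q x)) | p q x. p \<in> P \<and> q \<in> P \<and> p \<le> q \<and> x \<in> V p}"

definition colim_rel :: "'p::order set \<Rightarrow> ('p \<Rightarrow> 'v set) \<Rightarrow> ('p \<Rightarrow> 'p \<Rightarrow> 'v \<Rightarrow> 'v)
     \<Rightarrow> (('p \<times> 'v) \<times> ('p \<times> 'v)) set" where
  "colim_rel P V f = (colim_gen P V f \<union> (colim_gen P V f)\<inverse>)\<^sup>*"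

definition colim_vertex :: "'p::order set \<Rightarrow> ('p \<Rightarrow> 'v set) \<Rightarrow> ('p \<Rightarrow> 'p \<Rightarrow> 'v \<Rightarrow> 'v)
     \<Rightarrow> 'p \<Rightarrow> 'v \<Rightarrow> ('p \<times> 'v) set" where
  "colim_vertex P V f p x = colim_rel P V f `` {(p, x)}"

definition colim_face :: "'p::order set \<Rightarrow> ('p \<Rightarrow> 'v set) \<Rightarrow> ('p \<Rightarrow> 'p \<Rightarrow> 'v \<Rightarrow> 'v)
     \<Rightarrow> 'p \<Rightarrow> 'v set \<Rightarrow> ('p \<times> 'v) set set" where
  "colim_face P V f p s = colim_vertex P V f p ` s"

definition colim_simplices :: "'p::order set \<Rightarrow> ('p \<Rightarrow> 'v set) \<Rightarrow> ('p \<Rightarrow> 'v set set)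
     \<Rightarrow> ('p \<Rightarrow> 'p \<Rightarrow> 'v \<Rightarrow> 'v) \<Rightarrow> ('p \<times> 'v) set set set" where
  "colim_simplices P V S f = {colim_face P V f p s | p s. p \<in> P \<and> s \<in> S p}"

end

theory Submission
  imports Defs
begin

theorem lemma5p12:
  fixes P :: "'p::order set" and V :: "'p \<Rightarrow> 'v set" and S :: "'p \<Rightarrow> 'v set set"
    and f :: "'p \<Rightarrow> 'p \<Rightarrow> 'v \<Rightarrow> 'v"
    and \<sigma> \<tau> :: "('p \<times> 'v) set set"
  assumes "simpcomp_functor P V S f"
    and "\<sigma> \<in> colim_simplices P V S f" and "\<tau> \<in> colim_simplices P V S f"
    and "\<sigma> \<subseteq> \<tau>"
  shows "(\<exists>p\<in>P. \<tau> \<in> colim_face P V f p ` S p)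
    \<and> (\<forall>p\<in>P. \<tau> \<in> colim_face P V f p ` S p \<longrightarrow>
          {x \<in> colim_simplices P V S f. \<sigma> \<subseteq> x \<and> x \<subseteq> \<tau>} \<subseteq> colim_face P V f p ` S p)"
proof -
  have sc0: "\<forall>p\<in>P. simplicial_complex (V p) (S p)"
    using assms(1) unfolding simpcomp_functor_def by (elim conjE)
  have sc: "simplicial_complex (V p) (S p)" if "p \<in> P" for p
    using sc0 that by (rule bspec)
  have ne: "t \<noteq> {}" if "p \<in> P" "t \<in> S p" for p t
    using sc[OF that(1)] that(2) unfolding simplicial_complex_def by blast
  have cl: "t \<in> S p" if "p \<in> P" "s \<in> S p" "t \<subseteq> s" "t \<noteq> {}" for p s t
  proof -
    have "\<forall>s\<in>S p. \<forall>t. t \<subseteq> s \<and> t \<noteq> {} \<longrightarrow> t \<in> S p"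
      using sc[OF that(1)] unfolding simplicial_complex_def by (elim conjE)
    thus ?thesis using that(2-4) by blast
  qed
  show ?thesis
  proof
  show "\<exists>p\<in>P. \<tau> \<in> colim_face P V f p ` S p"
  proof -
    obtain p s where "p \<in> P" "s \<in> S p" "\<tau> = colim_face P V f p s"
      using assms(3) unfolding colim_simplices_def by (auto simp only: mem_Collect_eq)
    thus ?thesis by (intro bexI[of _ p] image_eqI[of _ _ s])
  qed
next
  show "\<forall>p\<in>P. \<tau> \<in> colim_face P V f p ` S p \<longrightarrow>
          {x \<in> colim_simplices P V S f. \<sigma> \<subseteq> x \<and> x \<subseteq> \<tau>} \<subseteq> colim_face P V f p ` S p"
  proof (intro ballI impI subsetI)
    fix p x
    assume p: "p \<in> P" and tp: "\<tau> \<in> colim_face P V f p ` S p"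
      and x: "x \<in> {x \<in> colim_simplices P V S f. \<sigma> \<subseteq> x \<and> x \<subseteq> \<tau>}"
    obtain s where s: "s \<in> S p" and ts: "\<tau> = colim_vertex P V f p ` s"
      using tp unfolding colim_face_def by (elim imageE) (simp only:)
    have xs: "x \<in> colim_simplices P V S f" and xsub: "x \<subseteq> \<tau>" using x by simp_all
    obtain q t where q: "q \<in> P" and t: "t \<in> S q" and xt: "x = colim_vertex P V f q ` t"
      using xs unfolding colim_simplices_def colim_face_def by (auto simp only: mem_Collect_eq)
    have "t \<noteq> {}" using ne[OF q t] .
    hence xne: "x \<noteq> {}" using xt by simp
    define t' where "t' = {v \<in> s. colim_vertex P V f p v \<in> x}"
    have img: "colim_vertex P V f p ` t' = x"
    proof
      show "colim_vertex P V f p ` t' \<subseteq> x" unfolding t'_def by auto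
      show "x \<subseteq> colim_vertex P V f p ` t'"
      proof
        fix y assume "y \<in> x"
        then have "y \<in> colim_vertex P V f p ` s" using xsub ts by auto
        then obtain v where "v \<in> s" "y = colim_vertex P V f p v" by auto
        thus "y \<in> colim_vertex P V f p ` t'" using \<open>y \<in> x\<close> unfolding t'_def by auto
      qed
    qed
    have "t' \<noteq> {}" using img xne by auto
    moreover have "t' \<subseteq> s" unfolding t'_def by auto
    ultimately have "t' \<in> S p" using cl[OF p s] by blast
    thus "x \<in> colim_face P V f p ` S p" using img unfolding colim_face_def by (metis image_eqI)
  qed
  qed
qed

end
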